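(* For any offline algorithm $\mathrm{Algo}(\cdot)$ (mapping datasets to policies), there exist an MDP instance $\mathcal{M}$ and an offline dataset $\mathcal{D}$ such that $\mathcal{D}$ can be generated by $\mathcal{M}$ (under some behavior policy), the optimal-policy concentrability condition fails (there is no optimal policy $\pi^*$ of $\mathcal{M}$ with $d^{\pi^*}_h(s,a)>0\implies d^\mu_h(s,a)>0$ for all $(h,s,a)$, where $\mu$ is the behavior policy), and $\mathrm{Algo}(\mathcal{D})$ incurs a sub-optimality bounded below by a positive absolute constant almost surely over the randomness of $\mathcal{D}$.
   Context: Episodic MDP with horizon $H$, initial distribution $d_1$; $d^\pi_h(s,a)$ state-action visitation density at step $h$ under $\pi$. Sub-optimality of a policy $\pi$: $\mathbb{E}_{s\sim d_1}[V^*_1(s)-V^\pi_1(s)]$, where $V^\pi_1$ is the value of $\pi$ and $V^*_1$ the optimal value. *)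

theory Defs
  imports "HOL-Probability.Probability"
begin

text \<open>States and actions are natural numbers; the state space is a
finite nonempty set, and the action space is (up to relabelling) a finite nonempty set:
every action outside it behaves exactly like some action inside it.
Steps are indexed 0..H-1 (paper: 1..H).\<close>

record mdp =
  states  :: "nat set"
  actions :: "nat set"
  horizon :: nat
  init    :: "nat pmf"
  trans   :: "nat \<Rightarrow> nat \<Rightarrow> nat \<Rightarrow> nat pmf"   (* step, state, action *)
  rew     :: "nat \<Rightarrow> nat \<Rightarrow> nat \<Rightarrow> real"       (* step, state, action *)

definition wf_mdp :: "mdp \<Rightarrow> bool" where
  "wf_mdp M \<longleftrightarrow>
     finite (states M) \<and> states M \<noteq> {} \<and> finite (actions M) \<and> actions M \<noteq> {} \<and>
     horizon M \<ge> 1 \<and>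
     set_pmf (init M) \<subseteq> states M \<and>
     (\<forall>h s a. set_pmf (trans M h s a) \<subseteq> states M) \<and>
     (\<forall>h s a. 0 \<le> rew M h s a \<and> rew M h s a \<le> 1) \<and>
     (\<forall>h s a. \<exists>a'\<in>actions M. rew M h s a = rew M h s a' \<and> trans M h s a = trans M h s a')"

text \<open>A (Markov, possibly stochastic, non-stationary) policy: step, state \<mapsto> action distribution.\<close>
type_synonym policy = "nat \<Rightarrow> nat \<Rightarrow> nat pmf"

fun val :: "mdp \<Rightarrow> policy \<Rightarrow> nat \<Rightarrow> nat \<Rightarrow> nat \<Rightarrow> real" where
  "val M pol h 0 s = 0"
| "val M pol h (Suc k) s =
     measure_pmf.expectation (pol h s)
       (\<lambda>a. rew M h s a + measure_pmf.expectation (trans M h s a) (\<lambda>s'. val M pol (Suc h) k s'))"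

definition V :: "mdp \<Rightarrow> policy \<Rightarrow> nat \<Rightarrow> nat \<Rightarrow> real" where
  "V M pol h s = val M pol h (horizon M - h) s"

definition Vstar :: "mdp \<Rightarrow> nat \<Rightarrow> nat \<Rightarrow> real" where
  "Vstar M h s = (SUP pol. V M pol h s)"

definition optimal_policy :: "mdp \<Rightarrow> policy \<Rightarrow> bool" where
  "optimal_policy M pol \<longleftrightarrow> (\<forall>h < horizon M. \<forall>s \<in> states M. V M pol h s = Vstar M h s)"

definition subopt :: "mdp \<Rightarrow> policy \<Rightarrow> real" where
  "subopt M pol = measure_pmf.expectation (init M) (\<lambda>s. Vstar M 0 s - V M pol 0 s)"

fun state_dist :: "mdp \<Rightarrow> policy \<Rightarrow> nat \<Rightarrow> nat pmf" where
  "state_dist M pol 0 = init M"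
| "state_dist M pol (Suc h) =
     bind_pmf (state_dist M pol h) (\<lambda>s. bind_pmf (pol h s) (\<lambda>a. trans M h s a))"

definition occ :: "mdp \<Rightarrow> policy \<Rightarrow> nat \<Rightarrow> nat \<Rightarrow> nat \<Rightarrow> real" where
  "occ M pol h s a = pmf (bind_pmf (state_dist M pol h) (\<lambda>s'. map_pmf (\<lambda>a'. (s', a')) (pol h s'))) (s, a)"

definition opt_concentrable :: "mdp \<Rightarrow> policy \<Rightarrow> bool" where
  "opt_concentrable M mu \<longleftrightarrow>
     (\<exists>pol. optimal_policy M pol \<and>
        (\<forall>h < horizon M. \<forall>s a. occ M pol h s a > 0 \<longrightarrow> occ M mu h s a > 0))"

type_synonym trajectory = "(nat \<times> nat \<times> real) list"
type_synonym dataset = "trajectory list"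

fun traj_from :: "mdp \<Rightarrow> policy \<Rightarrow> nat \<Rightarrow> nat \<Rightarrow> nat \<Rightarrow> trajectory pmf" where
  "traj_from M mu h 0 s = return_pmf []"
| "traj_from M mu h (Suc k) s =
     bind_pmf (mu h s) (\<lambda>a. bind_pmf (trans M h s a) (\<lambda>s'.
       map_pmf (\<lambda>rest. (s, a, rew M h s a) # rest) (traj_from M mu (Suc h) k s')))"

definition traj_dist :: "mdp \<Rightarrow> policy \<Rightarrow> trajectory pmf" where
  "traj_dist M mu = bind_pmf (init M) (traj_from M mu 0 (horizon M))"

fun iid_pmf :: "nat \<Rightarrow> 'b pmf \<Rightarrow> 'b list pmf" where
  "iid_pmf 0 p = return_pmf []"
| "iid_pmf (Suc k) p = bind_pmf p (\<lambda>x. map_pmf (\<lambda>xs. x # xs) (iid_pmf k p))"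

definition dataset_dist :: "mdp \<Rightarrow> policy \<Rightarrow> nat \<Rightarrow> dataset pmf" where
  "dataset_dist M mu K = iid_pmf K (traj_dist M mu)"

end

theory Submission
  imports Defs
begin

definition M1 :: mdp where
  "M1 = \<lparr>states = {0}, actions = {0,1,2}, horizon = 1, init = return_pmf 0,
         trans = (\<lambda>h s a. return_pmf 0), rew = (\<lambda>h s a. indicator {1::nat} a)\<rparr>"

definition M2 :: mdp where
  "M2 = \<lparr>states = {0}, actions = {0,1,2}, horizon = 1, init = return_pmf 0,
         trans = (\<lambda>h s a. return_pmf 0), rew = (\<lambda>h s a. indicator {a::nat. 2 \<le> a} a)\<rparr>"

definition mu0 :: policy where "mu0 = (\<lambda>h s. return_pmf 0)"

lemma wf1: "wf_mdp M1"
  unfolding wf_mdp_def M1_def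
  by (auto simp: indicator_def)

lemma wf2: "wf_mdp M2"
  unfolding wf_mdp_def M2_def
  by (auto simp: indicator_def)

lemma V1: "V M1 pol 0 s = measure (measure_pmf (pol 0 s)) {1}"
  by (simp add: V_def M1_def)

lemma V2: "V M2 pol 0 s = measure (measure_pmf (pol 0 s)) {a. 2 \<le> a}"
  by (simp add: V_def M2_def)

lemma Vstar1: "Vstar M1 0 s = 1"
  unfolding Vstar_def
proof (rule cSup_eq_maximum)
  show "1 \<in> range (\<lambda>pol. V M1 pol 0 s)"
    by (rule image_eqI[where x="\<lambda>h s. return_pmf 1"]) (simp_all add: V1)
  show "x \<le> 1" if "x \<in> range (\<lambda>pol. V M1 pol 0 s)" for x
    using that by (auto simp: V1)
qed

lemma Vstar2: "Vstar M2 0 s = 1"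
  unfolding Vstar_def
proof (rule cSup_eq_maximum)
  show "1 \<in> range (\<lambda>pol. V M2 pol 0 s)"
    by (rule image_eqI[where x="\<lambda>h s. return_pmf 2"]) (simp_all add: V2)
  show "x \<le> 1" if "x \<in> range (\<lambda>pol. V M2 pol 0 s)" for x
    using that by (auto simp: V2)
qed

lemma subopt1: "subopt M1 pol = 1 - measure (measure_pmf (pol 0 0)) {1}"
  by (simp add: subopt_def Vstar1 V1, simp add: M1_def)

lemma subopt2: "subopt M2 pol = 1 - measure (measure_pmf (pol 0 0)) {a. 2 \<le> a}"
  by (simp add: subopt_def Vstar2 V2, simp add: M2_def)

lemma occ0: "init M = return_pmf 0 \<Longrightarrow> occ M pol 0 0 a = pmf (pol 0 0) a"
  unfolding occ_def by (simp add: bind_return_pmf pmf_map_inj' inj_on_def)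

lemma data1: "dataset_dist M1 mu0 1 = return_pmf [[(0,0,0)]]"
  by (simp add: dataset_dist_def traj_dist_def M1_def mu0_def bind_return_pmf map_pmf_def indicator_def)

lemma data2: "dataset_dist M2 mu0 1 = return_pmf [[(0,0,0)]]"
  by (simp add: dataset_dist_def traj_dist_def M2_def mu0_def bind_return_pmf map_pmf_def indicator_def)


lemma not_conc1: "\<not> opt_concentrable M1 mu0"
proof
  assume "opt_concentrable M1 mu0"
  then obtain pol where op: "optimal_policy M1 pol"
    and c: "\<forall>h < horizon M1. \<forall>s a. occ M1 pol h s a > 0 \<longrightarrow> occ M1 mu0 h s a > 0"
    unfolding opt_concentrable_def by blast
  have "V M1 pol 0 0 = Vstar M1 0 0" using op unfolding optimal_policy_def by (simp add: M1_def)
  hence "pmf (pol 0 0) 1 = 1" by (simp add: V1 Vstar1 measure_pmf_single)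
  hence "occ M1 pol 0 0 1 > 0" by (simp add: occ0 M1_def)
  with c have "occ M1 mu0 0 0 1 > 0" by (simp add: M1_def)
  thus False by (simp add: occ0 M1_def mu0_def)
qed

lemma not_conc2: "\<not> opt_concentrable M2 mu0"
proof
  assume "opt_concentrable M2 mu0"
  then obtain pol where op: "optimal_policy M2 pol"
    and c: "\<forall>h < horizon M2. \<forall>s a. occ M2 pol h s a > 0 \<longrightarrow> occ M2 mu0 h s a > 0"
    unfolding opt_concentrable_def by blast
  have "V M2 pol 0 0 = Vstar M2 0 0" using op unfolding optimal_policy_def by (simp add: M2_def)
  hence "measure (measure_pmf (pol 0 0)) {a. 2 \<le> a} = 1" by (simp add: V2 Vstar2)
  hence "measure (measure_pmf (pol 0 0)) {a. 2 \<le> a} \<noteq> 0" by simp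
  then obtain a where a: "a \<in> set_pmf (pol 0 0)" "2 \<le> a"
    by (metis (mono_tags, lifting) measure_pmf_zero_iff disjoint_iff mem_Collect_eq)
  hence "occ M2 pol 0 0 a > 0" by (simp add: occ0 M2_def pmf_positive)
  with c have "occ M2 mu0 0 0 a > 0" by (simp add: M2_def)
  thus False using a by (simp add: occ0 M2_def mu0_def)
qed

theorem lemma10:
  shows "\<exists>c::real. c > 0 \<and>
    (\<forall>Algo :: dataset \<Rightarrow> policy.
       \<exists>M mu K. wf_mdp M \<and> K \<ge> 1 \<and>
         \<not> opt_concentrable M mu \<and>
         (AE D in measure_pmf (dataset_dist M mu K). subopt M (Algo D) \<ge> c))"
proof (intro exI[of _ "1/2"] conjI allI)
  fix Algo :: "dataset \<Rightarrow> policy"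
  define pol where "pol = Algo [[(0,0,0)]]"
  define p where "p = measure_pmf (pol 0 0)"
  have "measure p ({1} \<union> {a. 2 \<le> a}) = measure p {1} + measure p {a. 2 \<le> a}"
    unfolding p_def by (rule measure_pmf.finite_measure_Union) auto
  moreover have "measure p ({1} \<union> {a. 2 \<le> a}) \<le> 1" by (simp add: p_def)
  ultimately have sum: "measure p {1} + measure p {a. 2 \<le> a} \<le> 1" by simp
  show "\<exists>M mu K. wf_mdp M \<and> K \<ge> 1 \<and> \<not> opt_concentrable M mu \<and>
         (AE D in measure_pmf (dataset_dist M mu K). subopt M (Algo D) \<ge> 1/2)"
  proof (cases "measure p {1} \<le> 1/2")
    case True
    show ?thesis
      apply (rule exI[of _ M1], rule exI[of _ mu0], rule exI[of _ 1])
      using True wf1 not_conc1 data1 by (simp add: AE_measure_pmf_iff subopt1 p_def pol_def)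
  next
    case False
    show ?thesis
      apply (rule exI[of _ M2], rule exI[of _ mu0], rule exI[of _ 1])
      using False sum wf2 not_conc2 data2 by (simp add: AE_measure_pmf_iff subopt2 p_def pol_def)
  qed
qed (simp)

end
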